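(* Fix $m\ge 0$. Define differential polynomials $\mathscr{P}^{(k)}_{n[m]}$ for $n\ge m+1$ by $\mathscr{P}^{(k)}_{(m+1)[m]}=Q_+$ and, for $n\ge m+2$, $$\mathscr{P}^{(k)}_{n[m]}=(k+n-1)\,\partial\mathscr{P}^{(k+1)}_{(n-1)[m]}+:\Big(Q_++\sum_{i=1}^{n-m-1}A_i\Big)\mathscr{P}^{(k+1)}_{(n-1)[m]}:.$$ Then for $n\ge m+1$ the field $\mathcal{F}^{(k)}_{n[m]}=(-1)^{m+1}:\mathscr{P}^{(k)}_{n[m]}e^{-\Xi}:$ lies in $\mathcal{W}_{n[m]}(k)$, i.e. commutes with the screenings $E_i$ ($1\le i\le n-m-1$), $\Psi_+$, $\Psi_-$ and $E_{-i}$ ($1\le i\le m-1$) of the $n[m]$ realization. In particular $\mathscr{P}^{(k)}_{n[m]}$ depends only on $A_{n-m-1},\dots,A_1,Q_+$.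
   Context: Setup. Fix integers $n\ge 2$ and $0\le m\le n$, a generic complex number $k$ (in particular $k\neq -n$), and put $K=k+n$. Let $\varphi=(\varphi_1,\dots,\varphi_{n+1})$ be free scalar fields with OPE $\partial\varphi_i(z)\partial\varphi_j(w)\sim\delta_{ij}(z-w)^{-2}$, and let $(\,,\,)$ be the standard symmetric bilinear form on $\mathbb{C}^{n+1}$. Choose vectors $a_i$ ($1\le i\le n-m-1$), $a_{-i}$ ($1\le i\le m-1$), $\psi_+$ (present iff $m\le n-1$), $\psi_-$ (present iff $m\ge 1$), and $\xi$ in $\mathbb{C}^{n+1}$ whose nonzero pairwise products are: $(a_j,a_j)=2K$ for every $a_j$ present; $(a_i,a_{i+1})=-K$ for $1\le i\le n-m-2$; $(a_{-i},a_{-i-1})=-K$ for $1\le i\le m-2$; $(a_1,\psi_+)=-K$; $(a_{-1},\psi_-)=-K$; $(\psi_\pm,\psi_\pm)=1$; $(\psi_+,\psi_-)=K-1$; $(\psi_+,\xi)=1$; $(\psi_-,\xi)=-1$; all other products (including $(\xi,\xi)$ and $(a_j,\xi)$) vanish. Define currents $A_j=(a_j,\partial\varphi)$, $Q_\pm=(\psi_\pm,\partial\varphi)$, $Y=(\xi,\partial\varphi)$ and the field $\Xi=(\xi,\varphi)$. The screening operators are $E_j=\oint e^{(a_j,\varphi)}$ for each $a_j$ present and $\Psi_\pm=\oint e^{(\psi_\pm,\varphi)}$ for each $\psi_\pm$ present. Let $\mathcal{V}_\xi$ be the space of fields $:P(\partial\varphi)e^{p\Xi}:$, $p\in\mathbb{Z}$,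 with $P$ a normal-ordered differential polynomial in the components of $\partial\varphi$. A field $X(w)$ commutes with a screening $\oint s(z)\,dz$ if the residue at $z=w$ of the OPE $s(z)X(w)$ vanishes. The vertex algebra $\mathcal{W}_{n[m]}(k)$ is the centralizer in $\mathcal{V}_\xi$ of all these screenings. Since $K=k+n$ is unchanged under $(n,k)\mapsto(n-1,k+1)$, the vectors/currents of the $(n-1)[m]$ realization at level $k+1$ are identified with the corresponding subset of those of the $n[m]$ realization at level $k$. *)

theory Defs
  imports "HOL-Complex_Analysis.Complex_Analysis"
begin

text \<open>Vectors of C^(N+1) are functions nat => complex; only components 0..N matter.\<close>
type_synonym vec = "nat \<Rightarrow> complex"

definition bil :: "nat \<Rightarrow> vec \<Rightarrow> vec \<Rightarrow> complex" where
  "bil N u v = (\<Sum>i\<le>N. u i * v i)"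

text \<open>Normal-ordered differential polynomials in the components of the derivative of phi.
  DVar i j stands for the (j+1)-st derivative of phi_i.\<close>
datatype dpoly = DConst complex | DVar nat nat | DAdd dpoly dpoly | DMul dpoly dpoly

fun dderiv :: "dpoly \<Rightarrow> dpoly" where
  "dderiv (DConst c) = DConst 0"
| "dderiv (DVar i j) = DVar i (Suc j)"
| "dderiv (DAdd p q) = DAdd (dderiv p) (dderiv q)"
| "dderiv (DMul p q) = DAdd (DMul (dderiv p) q) (DMul p (dderiv q))"

fun deval :: "(nat \<Rightarrow> nat \<Rightarrow> complex) \<Rightarrow> dpoly \<Rightarrow> complex" where
  "deval x (DConst c) = c"
| "deval x (DVar i j) = x i j"
| "deval x (DAdd p q) = deval x p + deval x q"
| "deval x (DMul p q) = deval x p * deval x q"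

definition dsum :: "dpoly list \<Rightarrow> dpoly" where
  "dsum ps = foldr DAdd ps (DConst 0)"

definition current :: "nat \<Rightarrow> vec \<Rightarrow> dpoly" where
  "current N a = dsum (map (\<lambda>i. DMul (DConst (a i)) (DVar i 0)) [0..<Suc N])"

text \<open>The differential polynomials P^(k)_{n[m]}, all expressed in the currents of the
  ambient realization on C^(N+1) (vectors of the (n-1)[m] realization at level k+1 identified
  with the corresponding vectors of the n[m] realization).  Values for n < m+1 are junk.\<close>
fun Pscr :: "nat \<Rightarrow> vec \<Rightarrow> (int \<Rightarrow> vec) \<Rightarrow> nat \<Rightarrow> nat \<Rightarrow> complex \<Rightarrow> dpoly" where
  "Pscr N psip a m 0 k = current N psip"
| "Pscr N psip a m (Suc n) k =
     (if Suc n \<le> Suc m then current N psip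
      else DAdd (DMul (DConst (k + of_nat (Suc n) - 1)) (dderiv (Pscr N psip a m n (k + 1))))
                (DMul (DAdd (current N psip)
                            (dsum (map (\<lambda>i. current N (a (int i))) [1..<Suc n - m])))
                      (Pscr N psip a m n (k + 1))))"

text \<open>A field :P(d phi) e^(p Xi): (represented by P and p) commutes with the screening
  oint e^((s,phi)).  By Wick's theorem the OPE is
  e^((s,phi))(z) :P e^(p Xi):(w) = (z-w)^(p(s,xi)) :e^((s,phi)(z)) P(d^j phi(w) - (j-1)! s (z-w)^(-j)) e^(p Xi(w)):.
  The residue at z=w is a field :R(d phi) e^((s+p xi, phi)):, which vanishes iff the
  differential polynomial R vanishes, i.e. iff its evaluation on the jets of every
  entire vector-valued function f vanishes.  We therefore evaluate the normal ordered
  product classically on f and take the genuine residue.\<close>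
definition commutes :: "nat \<Rightarrow> vec \<Rightarrow> vec \<Rightarrow> dpoly \<Rightarrow> int \<Rightarrow> bool" where
  "commutes N xi s P p \<longleftrightarrow>
     (\<exists>e::int. of_int p * bil N s xi = of_int e \<and>
        (\<forall>f :: nat \<Rightarrow> complex \<Rightarrow> complex. \<forall>w.
           (\<forall>i. f i holomorphic_on UNIV) \<longrightarrow>
           residue (\<lambda>z. (z - w) powi e
                        * exp (\<Sum>i\<le>N. s i * f i z + of_int p * xi i * f i w)
                        * deval (\<lambda>i j. (deriv ^^ Suc j) (f i) w
                                        - fact j * s i / (z - w) ^ Suc j) P) w = 0))"

text \<open>The Gram conditions of the n[m] realization (on C^(n+1)), with K = k + n.
  Screening vectors a_j are indexed by j in J = {1..n-m-1} union {-(m-1)..-1};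
  psi_+ is present iff m < n, psi_- iff 1 <= m.\<close>
definition gram_ok :: "nat \<Rightarrow> nat \<Rightarrow> complex \<Rightarrow> (int \<Rightarrow> vec) \<Rightarrow> vec \<Rightarrow> vec \<Rightarrow> vec \<Rightarrow> bool" where
  "gram_ok n m K a psip psim xi \<longleftrightarrow>
    (let J = {j::int. 1 \<le> j \<and> j \<le> int n - int m - 1} \<union> {j::int. - (int m - 1) \<le> j \<and> j \<le> -1};
         B = bil n in
     (\<forall>i\<in>J. \<forall>j\<in>J. B (a i) (a j) = (if i = j then 2 * K else if \<bar>i - j\<bar> = 1 then - K else 0))
     \<and> (\<forall>j\<in>J. B (a j) xi = 0)
     \<and> B xi xi = 0
     \<and> (m < n \<longrightarrow> B psip psip = 1 \<and> B psip xi = 1 \<and>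
                   (\<forall>j\<in>J. B (a j) psip = (if j = 1 then - K else 0)))
     \<and> (1 \<le> m \<longrightarrow> B psim psim = 1 \<and> B psim xi = -1 \<and>
                   (\<forall>j\<in>J. B (a j) psim = (if j = -1 then - K else 0)))
     \<and> (m < n \<and> 1 \<le> m \<longrightarrow> B psip psim = K - 1))"

end

theory Submission
  imports Defs "HOL-Computational_Algebra.Polynomial"
begin

fun LP :: "(nat \<Rightarrow> complex \<Rightarrow> complex) \<Rightarrow> vec \<Rightarrow> dpoly \<Rightarrow> complex \<Rightarrow> complex poly" where
  "LP f s (DConst c) w = [:c:]"
| "LP f s (DVar i j) w = [:(deriv ^^ Suc j) (f i) w:] - monom (fact j * s i) (Suc j)"
| "LP f s (DAdd p q) w = LP f s p w + LP f s q w"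
| "LP f s (DMul p q) w = LP f s p w * LP f s q w"

fun LPd :: "(nat \<Rightarrow> complex \<Rightarrow> complex) \<Rightarrow> vec \<Rightarrow> dpoly \<Rightarrow> complex \<Rightarrow> complex poly" where
  "LPd f s (DConst c) w = 0"
| "LPd f s (DVar i j) w = [:(deriv ^^ Suc (Suc j)) (f i) w:]"
| "LPd f s (DAdd p q) w = LPd f s p w + LPd f s q w"
| "LPd f s (DMul p q) w = LPd f s p w * LP f s q w + LP f s p w * LPd f s q w"

fun bnd :: "dpoly \<Rightarrow> nat" where
  "bnd (DConst c) = 0"
| "bnd (DVar i j) = Suc j"
| "bnd (DAdd p q) = max (bnd p) (bnd q)"
| "bnd (DMul p q) = bnd p + bnd q"

lemma degree_monom_le': "degree (monom a n) \<le> n"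
  by (simp add: degree_monom_le)

lemma LP_deg: "degree (LP f s X w) \<le> bnd X \<and> degree (LPd f s X w) \<le> bnd X"
proof (induction X)
  case (DConst x)
  then show ?case by simp
next
  case (DVar i j)
  have "degree ([:(deriv ^^ Suc j) (f i) w:] - monom (fact j * s i) (Suc j)) \<le> Suc j"
    by (rule order.trans[OF degree_diff_le_max]) (auto intro: order.trans[OF degree_monom_le'])
  then show ?case by simp
next
  case (DAdd X1 X2)
  then show ?case
    by (auto intro!: order.trans[OF degree_add_le_max])
next
  case (DMul X1 X2)
  have a: "degree (LP f s X1 w * LP f s X2 w) \<le> bnd X1 + bnd X2"
    using DMul by (meson add_mono degree_mult_le order_trans)
  have b: "degree (LPd f s X1 w * LP f s X2 w) \<le> bnd X1 + bnd X2"
    using DMul by (meson add_mono degree_mult_le order_trans)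
  have c: "degree (LP f s X1 w * LPd f s X2 w) \<le> bnd X1 + bnd X2"
    using DMul by (meson add_mono degree_mult_le order_trans)
  show ?case using a b c by (auto intro!: order.trans[OF degree_add_le_max])
qed

lemma LP_dderiv: "LP f s (dderiv X) w = LPd f s X w + monom 1 2 * pderiv (LP f s X w)"
proof (induction X)
  case (DConst x)
  then show ?case by (simp add: pderiv_pCons)
next
  case (DVar i j)
  have "monom 1 2 * pderiv ([:(deriv ^^ Suc j) (f i) w:] - monom (fact j * s i) (Suc j))
      = - monom (fact (Suc j) * s i) (Suc (Suc j))"
    by (simp add: pderiv_diff pderiv_pCons pderiv_monom mult_monom algebra_simps)
  then show ?case by simp
next
  case (DAdd X1 X2)
  then show ?case by (simp add: pderiv_add algebra_simps)
next
  case (DMul X1 X2)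
  then show ?case by (simp add: pderiv_mult algebra_simps)
qed

lemma LP_eval:
  assumes "z \<noteq> w"
  shows "deval (\<lambda>i j. (deriv ^^ Suc j) (f i) w - fact j * s i / (z - w) ^ Suc j) X
       = poly (LP f s X w) (1 / (z - w))"
  by (induction X) (simp_all add: poly_monom power_one_over)

lemma hol_hd:
  assumes "g holomorphic_on UNIV"
  shows "((deriv ^^ n) g has_field_derivative (deriv ^^ Suc n) g w) (at w)"
proof -
  have "(deriv ^^ n) g holomorphic_on UNIV"
    using assms by (simp add: holomorphic_higher_deriv)
  then have "((deriv ^^ n) g has_field_derivative deriv ((deriv ^^ n) g) w) (at w)"
    by (meson DERIV_deriv_iff_field_differentiable UNIV_I holomorphic_on_imp_differentiable_at open_UNIV)
  then show ?thesis by simp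
qed

lemma LP_coeff_deriv:
  assumes "\<forall>i. f i holomorphic_on UNIV"
  shows "((\<lambda>w. coeff (LP f s X w) q) has_field_derivative coeff (LPd f s X w) q) (at w)"
proof (induction X arbitrary: q)
  case (DConst x)
  then show ?case by (simp add: coeff_pCons split: nat.split)
next
  case (DVar i j)
  show ?case
  proof (cases q)
    case 0
    then show ?thesis using hol_hd[of "f i" "Suc j" w] assms by (simp add: coeff_monom)
  next
    case (Suc q')
    then show ?thesis by (simp add: coeff_monom)
  qed
next
  case (DAdd X1 X2)
  then show ?case by (auto intro!: derivative_eq_intros)
next
  case (DMul X1 X2)
  have "((\<lambda>w. \<Sum>i\<le>q. coeff (LP f s X1 w) i * coeff (LP f s X2 w) (q - i)) has_field_derivative
     (\<Sum>i\<le>q. coeff (LPd f s X1 w) i * coeff (LP f s X2 w) (q - i) + coeff (LP f s X1 w) i * coeff (LPd f s X2 w) (q - i))) (at w)"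
  proof (rule DERIV_sum)
    fix i
    show "((\<lambda>w. coeff (LP f s X1 w) i * coeff (LP f s X2 w) (q - i)) has_field_derivative
     coeff (LPd f s X1 w) i * coeff (LP f s X2 w) (q - i) + coeff (LP f s X1 w) i * coeff (LPd f s X2 w) (q - i)) (at w)"
      using DERIV_mult[OF DMul.IH(1)[of i] DMul.IH(2)[of "q - i"]] by (simp add: algebra_simps)
  qed
  then show ?case by (simp add: coeff_mult sum.distrib)
qed

definition Tg :: "(complex \<Rightarrow> complex) \<Rightarrow> complex \<Rightarrow> int \<Rightarrow> complex" where
  "Tg G w n = (if n < 0 then 0 else (deriv ^^ nat n) G w / fact (nat n))"

lemma Tg_deriv:
  assumes "G holomorphic_on UNIV"
  shows "((\<lambda>w. Tg G w n) has_field_derivative of_int (n + 1) * Tg G w (n + 1)) (at w)"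
proof (cases "n < 0")
  case True
  then show ?thesis by (cases "n = -1") (simp_all add: Tg_def)
next
  case False
  then obtain k where k: "n = int k" by (metis nonneg_int_cases not_le)
  have "((\<lambda>w. (deriv ^^ k) G w / fact k) has_field_derivative (deriv ^^ Suc k) G w / fact k) (at w)"
    using DERIV_cdivide[OF hol_hd[OF assms, of k w], of "fact k"] by (simp add: divide_inverse mult.commute)
  moreover have "(deriv ^^ Suc k) G w / fact k = of_int (int k + 1) * ((deriv ^^ Suc k) G w / fact (Suc k))"
  proof -
    have f: "(fact (Suc k) :: complex) = of_nat (Suc k) * fact k" by (simp only: fact_Suc of_nat_mult)
    have "(of_nat (Suc k) :: complex) \<noteq> 0" by (simp only: of_nat_eq_0_iff)
    moreover have "(fact k :: complex) \<noteq> 0" by simp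
    moreover have "\<And>c F d :: complex. c \<noteq> 0 \<Longrightarrow> F \<noteq> 0 \<Longrightarrow> d / F = c * (d / (c * F))"
      by simp
    ultimately show ?thesis unfolding f by (metis of_int_of_nat_eq of_nat_Suc add.commute)
  qed
  ultimately show ?thesis using k by (simp add: Tg_def nat_add_distrib)
qed

lemma res_term:
  assumes G: "G holomorphic_on UNIV"
  shows "residue (\<lambda>z. G z * (z - w) powi k) w = Tg G w (- k - 1)"
proof (cases "k \<ge> 0")
  case True
  have "(\<lambda>z. G z * (z - w) powi k) holomorphic_on UNIV"
    using True G by (intro holomorphic_intros) auto
  then have "residue (\<lambda>z. G z * (z - w) powi k) w = 0"
    by (intro residue_holo[of UNIV]) auto
  then show ?thesis using True by (simp add: Tg_def)
next
  case False
  define n where "n = nat (- k - 1)"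
  have kn: "k = - int (Suc n)" using False by (simp add: n_def)
  have "eventually (\<lambda>z. G z * (z - w) powi k = G z / (z - w) ^ Suc n) (at w)"
    unfolding eventually_at_filter
    by (rule always_eventually) (simp only: kn power_int_minus power_int_of_nat divide_inverse, simp)
  then have "residue (\<lambda>z. G z * (z - w) powi k) w = residue (\<lambda>z. G z / (z - w) ^ Suc n) w"
    by (rule residue_cong) simp
  also have "\<dots> = (deriv ^^ n) G w / fact n"
    by (rule residue_holomorphic_over_power[OF open_UNIV _ G]) simp
  finally show ?thesis using False by (simp add: Tg_def kn)
qed

lemma res_sum:
  assumes "finite A" and "\<And>q. q \<in> A \<Longrightarrow> F q holomorphic_on UNIV - {w}"
  shows "residue (\<lambda>z. \<Sum>q\<in>A. F q z) w = (\<Sum>q\<in>A. residue (F q) w)"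
  using assms
proof (induction A rule: finite_induct)
  case empty
  then show ?case by (simp add: residue_const)
next
  case (insert x F')
  have "residue (\<lambda>z. \<Sum>q\<in>insert x F'. F q z) w = residue (\<lambda>z. F x z + (\<Sum>q\<in>F'. F q z)) w"
    using insert by simp
  also have "\<dots> = residue (F x) w + residue (\<lambda>z. \<Sum>q\<in>F'. F q z) w"
    using insert by (intro residue_add[OF open_UNIV]) (auto intro!: holomorphic_on_sum)
  finally show ?case using insert by simp
qed

definition RSB :: "(complex \<Rightarrow> complex) \<Rightarrow> int \<Rightarrow> nat \<Rightarrow> (nat \<Rightarrow> complex) \<Rightarrow> complex \<Rightarrow> complex" where
  "RSB G e B c w = (\<Sum>q\<le>B. c q * Tg G w (int q - e - 1))"

lemma res_poly:
  assumes G: "G holomorphic_on UNIV" and deg: "degree p \<le> B"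
  shows "residue (\<lambda>z. C * ((z - w) powi e * G z * poly p (1 / (z - w)))) w = C * RSB G e B (coeff p) w"
proof -
  have eq: "C * ((z - w) powi e * G z * poly p (1 / (z - w)))
      = (\<Sum>q\<le>B. C * coeff p q * (G z * (z - w) powi (e - int q)))" if "z \<noteq> w" for z
  proof -
    have "poly p (1 / (z - w)) = poly (\<Sum>i\<le>B. monom (coeff p i) i) (1 / (z - w))"
      using poly_as_sum_of_monoms'[OF deg] by simp
    also have "\<dots> = (\<Sum>i\<le>B. coeff p i * (1 / (z - w)) ^ i)"
      by (simp add: poly_sum poly_monom)
    finally have "C * ((z - w) powi e * G z * poly p (1 / (z - w)))
        = (\<Sum>i\<le>B. C * coeff p i * (G z * ((z - w) powi e * (1 / (z - w)) ^ i)))"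
      by (simp add: sum_distrib_left sum_distrib_right algebra_simps)
    also have "\<dots> = (\<Sum>q\<le>B. C * coeff p q * (G z * (z - w) powi (e - int q)))"
    proof (rule sum.cong[OF refl])
      fix q
      have "(z - w) powi (e - int q) = (z - w) powi e / (z - w) powi (int q)"
        using that by (intro power_int_diff) simp
      then show "C * coeff p q * (G z * ((z - w) powi e * (1 / (z - w)) ^ q))
          = C * coeff p q * (G z * (z - w) powi (e - int q))"
        by (simp add: power_one_over divide_inverse power_inverse)
    qed
    finally show ?thesis .
  qed
  have "residue (\<lambda>z. C * ((z - w) powi e * G z * poly p (1 / (z - w)))) w
      = residue (\<lambda>z. \<Sum>q\<le>B. C * coeff p q * (G z * (z - w) powi (e - int q))) w"
    by (rule residue_cong) (auto simp: eventually_at_filter eq intro!: always_eventually)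
  also have "\<dots> = (\<Sum>q\<le>B. residue (\<lambda>z. C * coeff p q * (G z * (z - w) powi (e - int q))) w)"
    using G by (intro res_sum) (auto intro!: holomorphic_intros holomorphic_on_subset[OF G])
  also have "\<dots> = (\<Sum>q\<le>B. C * coeff p q * Tg G w (int q - e - 1))"
  proof (rule sum.cong[OF refl])
    fix q
    have "residue (\<lambda>z. C * coeff p q * (G z * (z - w) powi (e - int q))) w
        = C * coeff p q * residue (\<lambda>z. G z * (z - w) powi (e - int q)) w"
      using G by (intro residue_lmul[OF open_UNIV]) (auto intro!: holomorphic_intros holomorphic_on_subset[OF G])
    then show "residue (\<lambda>z. C * coeff p q * (G z * (z - w) powi (e - int q))) w = C * coeff p q * Tg G w (int q - e - 1)"
      using res_term[OF G, of w "e - int q"] by simp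
  qed
  finally show ?thesis by (simp add: RSB_def sum_distrib_left mult.assoc)
qed

definition Dop :: "complex \<Rightarrow> dpoly \<Rightarrow> dpoly \<Rightarrow> dpoly" where
  "Dop \<kappa> U X = DAdd (DMul (DConst \<kappa>) (dderiv X)) (DMul U X)"

lemma coeff_Dop:
  assumes U: "LP f s U w = [:a:] - monom b 1"
  shows "coeff (LP f s (Dop \<kappa> U X) w) q = \<kappa> * coeff (LPd f s X w) q + a * coeff (LP f s X w) q
     + (if q = 0 then 0 else (\<kappa> * of_nat (q - 1) - b) * coeff (LP f s X w) (q - 1))"
proof -
  have e1: "coeff (monom 1 2 * pderiv (LP f s X w)) q
     = (if q = 0 then 0 else of_nat (q - 1) * coeff (LP f s X w) (q - 1))"
    by (cases q; cases "q - 1") (simp_all add: coeff_monom_mult coeff_pderiv)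
  have e2: "coeff (monom b 1 * LP f s X w) q = (if q = 0 then 0 else b * coeff (LP f s X w) (q - 1))"
    by (simp add: coeff_monom_mult)
  have eq: "LP f s (Dop \<kappa> U X) w = smult \<kappa> (LPd f s X w + monom 1 2 * pderiv (LP f s X w))
       + (smult a (LP f s X w) - monom b 1 * LP f s X w)"
    by (simp add: Dop_def LP_dderiv U algebra_simps smult_add_right)
  show ?thesis unfolding eq coeff_add coeff_diff coeff_smult e1 e2
    by (simp add: algebra_simps)
qed

definition RSd :: "(nat \<Rightarrow> complex \<Rightarrow> complex) \<Rightarrow> vec \<Rightarrow> (complex \<Rightarrow> complex) \<Rightarrow> int \<Rightarrow> nat \<Rightarrow> dpoly \<Rightarrow> complex \<Rightarrow> complex" where
  "RSd f s G e B X w = (\<Sum>q\<le>B. coeff (LPd f s X w) q * Tg G w (int q - e - 1)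
      + coeff (LP f s X w) q * (of_int (int q - e) * Tg G w (int q - e)))"

lemma RSB_deriv:
  assumes f: "\<forall>i. f i holomorphic_on UNIV" and G: "G holomorphic_on UNIV"
  shows "((\<lambda>w. RSB G e B (coeff (LP f s X w)) w) has_field_derivative RSd f s G e B X w) (at w)"
  unfolding RSB_def RSd_def
proof (rule DERIV_sum)
  fix q
  show "((\<lambda>w. coeff (LP f s X w) q * Tg G w (int q - e - 1)) has_field_derivative
      coeff (LPd f s X w) q * Tg G w (int q - e - 1) + coeff (LP f s X w) q * (of_int (int q - e) * Tg G w (int q - e))) (at w)"
    using DERIV_mult[OF LP_coeff_deriv[OF f, of s X q w] Tg_deriv[OF G, of "int q - e - 1" w]]
    by (simp add: algebra_simps)
qed

lemma lemmaR:
  assumes U: "\<And>w. LP f s U w = [:\<alpha> w:] - monom \<beta> 1"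
    and d1: "\<And>w. degree (LP f s X w) \<le> B" and d2: "\<And>w. degree (LPd f s X w) \<le> B"
  shows "RSB G e (Suc B) (coeff (LP f s (Dop \<kappa> U X) w)) w
     = \<kappa> * RSd f s G e B X w + \<alpha> w * RSB G e B (coeff (LP f s X w)) w
       + (\<kappa> * of_int e - \<beta>) * RSB G (e - 1) B (coeff (LP f s X w)) w"
proof -
  define c where "c = coeff (LP f s X w)"
  define d where "d = coeff (LPd f s X w)"
  define T where "T = Tg G w"
  have c0: "c (Suc B) = 0" unfolding c_def using d1[of w] by (simp add: coeff_eq_0)
  have d0: "d (Suc B) = 0" unfolding d_def using d2[of w] by (simp add: coeff_eq_0)
  have "RSB G e (Suc B) (coeff (LP f s (Dop \<kappa> U X) w)) w
     = (\<Sum>q\<le>Suc B. (\<kappa> * d q + \<alpha> w * c q) * T (int q - e - 1))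
       + (\<Sum>q\<le>Suc B. (if q = 0 then 0 else (\<kappa> * of_nat (q - 1) - \<beta>) * c (q - 1)) * T (int q - e - 1))"
    unfolding RSB_def coeff_Dop[OF U] c_def[symmetric] d_def[symmetric] T_def[symmetric]
    by (simp add: sum.distrib[symmetric] algebra_simps)
  also have "(\<Sum>q\<le>Suc B. (\<kappa> * d q + \<alpha> w * c q) * T (int q - e - 1))
      = (\<Sum>q\<le>B. (\<kappa> * d q + \<alpha> w * c q) * T (int q - e - 1))"
    by (simp add: c0 d0)
  also have "(\<Sum>q\<le>Suc B. (if q = 0 then 0 else (\<kappa> * of_nat (q - 1) - \<beta>) * c (q - 1)) * T (int q - e - 1))
      = (\<Sum>q\<le>B. (\<kappa> * of_nat q - \<beta>) * c q * T (int q - e))"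
    by (subst sum.atMost_Suc_shift) simp
  finally have L: "RSB G e (Suc B) (coeff (LP f s (Dop \<kappa> U X) w)) w
      = (\<Sum>q\<le>B. (\<kappa> * d q + \<alpha> w * c q) * T (int q - e - 1) + (\<kappa> * of_nat q - \<beta>) * c q * T (int q - e))"
    by (simp add: sum.distrib)
  have R: "\<kappa> * RSd f s G e B X w + \<alpha> w * RSB G e B (coeff (LP f s X w)) w
       + (\<kappa> * of_int e - \<beta>) * RSB G (e - 1) B (coeff (LP f s X w)) w
     = (\<Sum>q\<le>B. \<kappa> * (d q * T (int q - e - 1) + c q * (of_int (int q - e) * T (int q - e)))
          + \<alpha> w * (c q * T (int q - e - 1)) + (\<kappa> * of_int e - \<beta>) * (c q * T (int q - (e - 1) - 1)))"
    unfolding RSd_def RSB_def c_def[symmetric] d_def[symmetric] T_def[symmetric]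
    by (simp only: sum_distrib_left sum.distrib[symmetric])
  show ?thesis unfolding L R
    by (rule sum.cong[OF refl]) (simp add: algebra_simps)
qed

definition cur :: "nat \<Rightarrow> vec \<Rightarrow> (int \<Rightarrow> vec) \<Rightarrow> nat \<Rightarrow> dpoly" where
  "cur N psip a l = DAdd (current N psip) (dsum (map (\<lambda>i. current N (a (int i))) [1..<Suc l]))"

fun Ch :: "nat \<Rightarrow> vec \<Rightarrow> (int \<Rightarrow> vec) \<Rightarrow> complex \<Rightarrow> nat \<Rightarrow> dpoly" where
  "Ch N psip a \<kappa> 0 = current N psip"
| "Ch N psip a \<kappa> (Suc l) = Dop \<kappa> (cur N psip a (Suc l)) (Ch N psip a \<kappa> l)"

lemma Pscr_Ch: "Pscr N psip a m (m + 1 + l) k = Ch N psip a (k + of_nat (m + 1 + l) - 1) l"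
proof (induction l arbitrary: k)
  case 0
  then show ?case by simp
next
  case (Suc l)
  have e: "m + 1 + Suc l = Suc (m + 1 + l)" by simp
  have k: "k + of_nat (Suc (m + 1 + l)) - 1 = (k + 1) + of_nat (m + 1 + l) - 1" by simp
  have u: "[1..<Suc (m + 1 + l) - m] = [1..<Suc (Suc l)]" by simp
  show ?case unfolding e Pscr.simps Suc.IH
    by (simp only: k u) (simp add: Dop_def cur_def)
qed

lemma sl_upt0: "sum_list (map g [0..<Suc N]) = sum g {..N}"
  by (simp only: sum_set_upt_conv_sum_list_nat[symmetric] set_upt atLeast0LessThan lessThan_Suc_atMost)

lemma sl_upt1: "sum_list (map g [1..<Suc l]) = sum g {1..l}"
  by (simp only: sum_set_upt_conv_sum_list_nat[symmetric] set_upt atLeastLessThanSuc_atLeastAtMost)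

lemma LP_dsum: "LP f s (dsum xs) w = sum_list (map (\<lambda>p. LP f s p w) xs)"
  by (induction xs) (simp_all add: dsum_def)

lemma LP_current: "LP f s (current N u) w = [:\<Sum>i\<le>N. u i * deriv (f i) w:] - monom (bil N u s) 1"
proof -
  have "LP f s (current N u) w = (\<Sum>i\<le>N. [:u i:] * ([:deriv (f i) w:] - monom (s i) 1))"
    unfolding current_def LP_dsum map_map o_def sl_upt0 by simp
  also have "\<dots> = [:\<Sum>i\<le>N. u i * deriv (f i) w:] - monom (bil N u s) 1"
    by (rule poly_eqI) (simp add: coeff_sum bil_def coeff_monom coeff_pCons sum_negf split: nat.split)
  finally show ?thesis .
qed

definition ca :: "nat \<Rightarrow> vec \<Rightarrow> (int \<Rightarrow> vec) \<Rightarrow> (nat \<Rightarrow> complex \<Rightarrow> complex) \<Rightarrow> nat \<Rightarrow> complex \<Rightarrow> complex" where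
  "ca N psip a f l w = (\<Sum>i\<le>N. psip i * deriv (f i) w) + (\<Sum>r\<in>{1..l}. \<Sum>i\<le>N. a (int r) i * deriv (f i) w)"

definition cb :: "nat \<Rightarrow> vec \<Rightarrow> (int \<Rightarrow> vec) \<Rightarrow> vec \<Rightarrow> nat \<Rightarrow> complex" where
  "cb N psip a s l = bil N psip s + (\<Sum>r\<in>{1..l}. bil N (a (int r)) s)"

lemma LP_cur: "LP f s (cur N psip a l) w = [:ca N psip a f l w:] - monom (cb N psip a s l) 1"
proof -
  have "LP f s (cur N psip a l) w = LP f s (current N psip) w + (\<Sum>r\<in>{1..l}. LP f s (current N (a (int r))) w)"
    unfolding cur_def LP.simps LP_dsum map_map o_def sl_upt1 ..
  also have "\<dots> = [:ca N psip a f l w:] - monom (cb N psip a s l) 1"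
    unfolding LP_current
    by (rule poly_eqI) (simp add: coeff_sum ca_def cb_def coeff_monom coeff_pCons sum.distrib sum_subtractf split: nat.split)
  finally show ?thesis .
qed

definition Gf :: "nat \<Rightarrow> vec \<Rightarrow> (nat \<Rightarrow> complex \<Rightarrow> complex) \<Rightarrow> complex \<Rightarrow> complex" where
  "Gf N s f = (\<lambda>z. exp (\<Sum>i\<le>N. s i * f i z))"

lemma G_hol: "\<forall>i. f i holomorphic_on UNIV \<Longrightarrow> Gf N s f holomorphic_on UNIV"
  unfolding Gf_def by (intro holomorphic_intros holomorphic_on_sum) auto

lemma f_deriv: "g holomorphic_on UNIV \<Longrightarrow> (g has_field_derivative deriv g w) (at w)"
  using hol_hd[of g 0 w] by simp

lemma G_deriv:
  assumes "\<forall>i. f i holomorphic_on UNIV"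
  shows "(Gf N s f has_field_derivative (\<Sum>i\<le>N. s i * deriv (f i) w) * Gf N s f w) (at w)"
proof -
  have "((\<lambda>z. \<Sum>i\<le>N. s i * f i z) has_field_derivative (\<Sum>i\<le>N. s i * deriv (f i) w)) (at w)"
    by (intro DERIV_sum DERIV_cmult f_deriv) (use assms in auto)
  from DERIV_chain2[OF DERIV_exp this] show ?thesis
    by (simp add: Gf_def mult.commute)
qed

lemma Tg0: "Tg G w 0 = G w" by (simp add: Tg_def)
lemma Tg1: "Tg G w 1 = deriv G w" by (simp add: Tg_def)
lemma Tgneg: "n < 0 \<Longrightarrow> Tg G w n = 0" by (simp add: Tg_def)

lemma RSB_deg:
  assumes "degree p \<le> B"
  shows "RSB G e B (coeff p) w = (\<Sum>q\<le>degree p. coeff p q * Tg G w (int q - e - 1))"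
  unfolding RSB_def
  by (rule sum.mono_neutral_right) (use assms in \<open>auto simp: coeff_eq_0\<close>)

lemma RSB_any:
  "degree p \<le> B1 \<Longrightarrow> degree p \<le> B2 \<Longrightarrow> RSB G e B1 (coeff p) w = RSB G e B2 (coeff p) w"
  by (simp add: RSB_deg)

lemma RSB_trunc:
  assumes "\<And>q. q > 1 \<Longrightarrow> c q = 0" "1 \<le> B"
  shows "RSB G e B c w = c 0 * Tg G w (- e - 1) + c 1 * Tg G w (- e)"
proof -
  have "RSB G e B c w = (\<Sum>q\<le>1. c q * Tg G w (int q - e - 1))"
    unfolding RSB_def
    by (rule sum.mono_neutral_right) (use assms in auto)
  then show ?thesis by simp
qed

lemma deg_Dop:
  assumes U: "LP f s U w = [:a:] - monom b 1"
    and "degree (LP f s X w) \<le> B" "degree (LPd f s X w) \<le> B"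
  shows "degree (LP f s (Dop \<kappa> U X) w) \<le> Suc B"
proof (rule degree_le, intro allI impI)
  fix q assume q: "Suc B < q"
  then show "coeff (LP f s (Dop \<kappa> U X) w) q = 0"
    unfolding coeff_Dop[OF U] using assms(2,3) by (simp add: coeff_eq_0)
qed

locale chainctx =
  fixes N :: nat and f :: "nat \<Rightarrow> complex \<Rightarrow> complex" and s psip :: vec
    and a :: "int \<Rightarrow> vec" and \<kappa> :: complex
  assumes hol: "\<forall>i. f i holomorphic_on UNIV"
begin

abbreviation "G \<equiv> Gf N s f"
abbreviation "X l \<equiv> Ch N psip a \<kappa> l"

definition \<rho> :: "int \<Rightarrow> nat \<Rightarrow> complex \<Rightarrow> complex" where
  "\<rho> e l w = RSB G e (bnd (X l)) (coeff (LP f s (X l) w)) w"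

lemma Ghol: "G holomorphic_on UNIV" using G_hol[OF hol] .

lemma deg1: "degree (LP f s (X l) w) \<le> bnd (X l)" using LP_deg by blast
lemma deg2: "degree (LPd f s (X l) w) \<le> bnd (X l)" using LP_deg by blast

lemma \<rho>_deriv: "((\<lambda>w. \<rho> e l w) has_field_derivative RSd f s G e (bnd (X l)) (X l) w) (at w)"
  unfolding \<rho>_def by (rule RSB_deriv[OF hol Ghol])

lemma chainR:
  "\<rho> e (Suc l) w = \<kappa> * RSd f s G e (bnd (X l)) (X l) w + ca N psip a f (Suc l) w * \<rho> e l w
     + (\<kappa> * of_int e - cb N psip a s (Suc l)) * \<rho> (e - 1) l w"
proof -
  have "\<rho> e (Suc l) w = RSB G e (Suc (bnd (X l))) (coeff (LP f s (Dop \<kappa> (cur N psip a (Suc l)) (X l)) w)) w"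
    unfolding \<rho>_def Ch.simps
    by (rule RSB_any) (use deg1[of "Suc l" w] deg_Dop[OF LP_cur deg1 deg2] in auto)
  also have "\<dots> = \<kappa> * RSd f s G e (bnd (X l)) (X l) w + ca N psip a f (Suc l) w * \<rho> e l w
     + (\<kappa> * of_int e - cb N psip a s (Suc l)) * \<rho> (e - 1) l w"
    unfolding \<rho>_def by (rule lemmaR[OF LP_cur deg1 deg2])
  finally show ?thesis .
qed

lemma zero_step:
  assumes z: "\<forall>w. \<rho> e l w = 0" and c: "\<kappa> * of_int e = cb N psip a s (Suc l)"
  shows "\<rho> e (Suc l) w = 0"
proof -
  have "((\<lambda>w. \<rho> e l w) has_field_derivative 0) (at w)"
    using z by simp
  then have "RSd f s G e (bnd (X l)) (X l) w = 0"
    using DERIV_unique[OF \<rho>_deriv] by blast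
  then show ?thesis using chainR[of e l w] z c by simp
qed

lemma zero_prop:
  assumes z: "\<forall>w. \<rho> e l0 w = 0"
    and c: "\<And>l. l0 \<le> l \<Longrightarrow> l < L \<Longrightarrow> \<kappa> * of_int e = cb N psip a s (Suc l)"
    and "l0 \<le> L"
  shows "\<rho> e L w = 0"
  using assms(3) c
proof (induction L arbitrary: w)
  case 0
  then show ?case using z by simp
next
  case (Suc L)
  show ?case
  proof (cases "l0 = Suc L")
    case True
    then show ?thesis using z by simp
  next
    case False
    then have "\<forall>w. \<rho> e L w = 0" using Suc by auto
    then show ?thesis using zero_step Suc.prems(2)[of L] False Suc.prems(1) by auto
  qed
qed

lemma rho0:
  "\<rho> e 0 w = ca N psip a f 0 w * Tg G w (- e - 1) - cb N psip a s 0 * Tg G w (- e)"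
proof -
  have L: "LP f s (current N psip) w = [:ca N psip a f 0 w:] - monom (cb N psip a s 0) 1"
    using LP_current[of f s N psip w] by (simp add: ca_def cb_def)
  have d: "degree (LP f s (X 0) w) \<le> 1" unfolding Ch.simps L
    by (rule order.trans[OF degree_diff_le_max]) (auto intro: order.trans[OF degree_monom_le'])
  have "\<rho> e 0 w = RSB G e 1 (coeff (LP f s (X 0) w)) w"
    unfolding \<rho>_def by (rule RSB_any[OF deg1 d])
  also have "\<dots> = ca N psip a f 0 w * Tg G w (- e - 1) - cb N psip a s 0 * Tg G w (- e)"
    by (subst RSB_trunc) (auto simp: L coeff_monom coeff_pCons split: nat.split)
  finally show ?thesis .
qed

lemma dcoeff_zero:
  assumes "\<forall>w. coeff (LP f s Y w) q = 0"
  shows "coeff (LPd f s Y w) q = 0"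
proof -
  have "((\<lambda>w. coeff (LP f s Y w) q) has_field_derivative 0) (at w)"
    using assms by simp
  then show ?thesis using DERIV_unique[OF LP_coeff_deriv[OF hol]] by blast
qed

lemma const_step:
  assumes d: "\<forall>w. degree (LP f s (X l) w) = 0" and c: "cb N psip a s (Suc l) = 0"
  shows "degree (LP f s (X (Suc l)) w) = 0"
proof -
  have "degree (LP f s (X (Suc l)) w) \<le> 0"
  proof (rule degree_le, intro allI impI)
    fix q :: nat assume q: "0 < q"
    have cq: "\<forall>w. coeff (LP f s (X l) w) q = 0" using d q by (simp add: coeff_eq_0)
    have cq1: "q > 1 \<Longrightarrow> coeff (LP f s (X l) w) (q - 1) = 0" using d by (simp add: coeff_eq_0)
    have dq: "coeff (LPd f s (X l) w) q = 0" by (rule dcoeff_zero[OF cq])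
    show "coeff (LP f s (X (Suc l)) w) q = 0"
      unfolding Ch.simps coeff_Dop[OF LP_cur] using q dq cq cq1 c
      by (cases "q = 1") auto
  qed
  then show ?thesis by simp
qed

lemma const_upto:
  assumes "cb N psip a s 0 = 0" "\<And>l'. l' < l \<Longrightarrow> cb N psip a s (Suc l') = 0"
  shows "degree (LP f s (X l) w) = 0"
  using assms(2)
proof (induction l arbitrary: w)
  case 0
  have "LP f s (current N psip) w = [:ca N psip a f 0 w:] - monom (cb N psip a s 0) 1"
    using LP_current[of f s N psip w] by (simp add: ca_def cb_def)
  then show ?case using assms(1) by simp
next
  case (Suc l)
  then show ?case using const_step[of l] by auto
qed

lemma rho_trunc:
  assumes "\<And>q. q > 1 \<Longrightarrow> coeff (LP f s (X l) w) q = 0"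
  shows "\<rho> e l w = coeff (LP f s (X l) w) 0 * Tg G w (- e - 1) + coeff (LP f s (X l) w) 1 * Tg G w (- e)"
proof -
  have d: "degree (LP f s (X l) w) \<le> max 1 (bnd (X l))"
    using deg1[of l w] by simp
  have "\<rho> e l w = RSB G e (max 1 (bnd (X l))) (coeff (LP f s (X l) w)) w"
    unfolding \<rho>_def by (rule RSB_any[OF deg1 d])
  also have "\<dots> = coeff (LP f s (X l) w) 0 * Tg G w (- e - 1) + coeff (LP f s (X l) w) 1 * Tg G w (- e)"
    by (rule RSB_trunc) (use assms in auto)
  finally show ?thesis .
qed

lemma second_half:
  fixes K :: complex and Y Y' :: "complex \<Rightarrow> complex"
  assumes c1: "\<And>w q. q > 1 \<Longrightarrow> coeff (LP f s (X l) w) q = 0"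
    and Yd: "\<And>w. (Y has_field_derivative Y' w) (at w)"
    and c10: "\<And>w. coeff (LP f s (X l) w) 0 = \<kappa> * Y' w + ca N psip a f l w * Y w"
    and c11: "\<And>w. coeff (LP f s (X l) w) 1 = K * Y w"
    and cbS: "cb N psip a s (Suc l) = K"
    and sig: "\<And>w. ca N psip a f (Suc l) w = ca N psip a f l w + (\<Sum>i\<le>N. s i * deriv (f i) w)"
    and kK: "\<kappa> = K - 1"
  shows "\<rho> 0 (Suc l) w = 0"
proof -
  define \<sigma> where "\<sigma> w = (\<Sum>i\<le>N. s i * deriv (f i) w)" for w
  have Gd: "(G has_field_derivative \<sigma> w * G w) (at w)" for w
    unfolding \<sigma>_def by (rule G_deriv[OF hol])
  have G1: "Tg G w 1 = \<sigma> w * G w" for w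
    using Tg1 DERIV_imp_deriv[OF Gd] by simp
  have r0: "\<rho> 0 l w = K * Y w * G w" for w
    using rho_trunc[where l=l and w=w and e=0, OF c1] c11 by (simp add: Tg0 Tgneg)
  have r1: "\<rho> (0 - 1) l w = (\<kappa> * Y' w + ca N psip a f l w * Y w) * G w + K * Y w * (\<sigma> w * G w)"
    using rho_trunc[where l=l and w=w and e="-1", OF c1] c10 c11 G1 by (simp add: Tg0)
  have "((\<lambda>w. \<rho> 0 l w) has_field_derivative K * (Y' w * G w + Y w * (\<sigma> w * G w))) (at w)"
    unfolding r0 using DERIV_cmult[OF DERIV_mult[OF Yd Gd], of K] by (simp add: mult.assoc mult.left_commute mult.commute)
  then have RS: "RSd f s G 0 (bnd (X l)) (X l) w = K * (Y' w * G w + Y w * (\<sigma> w * G w))"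
    using DERIV_unique[OF \<rho>_deriv] by blast
  show ?thesis
    unfolding chainR[of 0 l w] RS cbS r0 r1 sig \<sigma>_def[symmetric]
    by (simp add: algebra_simps kK)
qed

lemma first_half:
  assumes d: "\<forall>w. degree (LP f s (X l) w) = 0" and c: "cb N psip a s (Suc l) = - K"
  shows "\<And>w q. q > 1 \<Longrightarrow> coeff (LP f s (X (Suc l)) w) q = 0"
    and "\<And>w. coeff (LP f s (X (Suc l)) w) 0 = \<kappa> * coeff (LPd f s (X l) w) 0 + ca N psip a f (Suc l) w * coeff (LP f s (X l) w) 0"
    and "\<And>w. coeff (LP f s (X (Suc l)) w) 1 = K * coeff (LP f s (X l) w) 0"
proof -
  have cq: "\<And>q. q > 0 \<Longrightarrow> \<forall>w. coeff (LP f s (X l) w) q = 0" using d by (simp add: coeff_eq_0)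
  have dq: "\<And>q w. q > 0 \<Longrightarrow> coeff (LPd f s (X l) w) q = 0" using dcoeff_zero cq by blast
  show "\<And>w q. q > 1 \<Longrightarrow> coeff (LP f s (X (Suc l)) w) q = 0"
    unfolding Ch.simps coeff_Dop[OF LP_cur] using cq dq by simp
  show "\<And>w. coeff (LP f s (X (Suc l)) w) 0 = \<kappa> * coeff (LPd f s (X l) w) 0 + ca N psip a f (Suc l) w * coeff (LP f s (X l) w) 0"
    unfolding Ch.simps coeff_Dop[OF LP_cur] by simp
  show "\<And>w. coeff (LP f s (X (Suc l)) w) 1 = K * coeff (LP f s (X l) w) 0"
    unfolding Ch.simps coeff_Dop[OF LP_cur] using cq dq c by simp
qed

lemma sigma_G: "Tg G w 1 = (\<Sum>i\<le>N. s i * deriv (f i) w) * G w"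
  using Tg1 DERIV_imp_deriv[OF G_deriv[OF hol]] by simp

lemma case_psip:
  assumes sp: "s = psip" and c0: "cb N psip a s 0 = 1"
    and cs: "\<And>l. l < L \<Longrightarrow> cb N psip a s (Suc l) = - \<kappa>"
  shows "\<rho> (-1) L w = 0"
proof -
  have z: "\<forall>w. \<rho> (-1) 0 w = 0"
    using rho0[of "-1"] c0 sigma_G by (simp add: Tg0 ca_def sp)
  have c: "\<And>l. 0 \<le> l \<Longrightarrow> l < L \<Longrightarrow> \<kappa> * of_int (-1) = cb N psip a s (Suc l)"
    using cs by simp
  show ?thesis by (rule zero_prop[OF z c]) auto
qed

lemma case_psim:
  assumes cs: "\<And>l. l < L \<Longrightarrow> cb N psip a s (Suc l) = \<kappa>"
  shows "\<rho> 1 L w = 0"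
proof -
  have z: "\<forall>w. \<rho> 1 0 w = 0"
    using rho0[of 1] by (simp add: Tgneg)
  have c: "\<And>l. 0 \<le> l \<Longrightarrow> l < L \<Longrightarrow> \<kappa> * of_int 1 = cb N psip a s (Suc l)"
    using cs by simp
  show ?thesis by (rule zero_prop[OF z c]) auto
qed

lemma case_zero:
  assumes c0: "cb N psip a s 0 = 0" and cs: "\<And>l. l < L \<Longrightarrow> cb N psip a s (Suc l) = 0"
  shows "\<rho> 0 L w = 0"
proof -
  have z: "\<forall>w. \<rho> 0 0 w = 0"
    using rho0[of 0] c0 by (simp add: Tgneg)
  have c: "\<And>l. 0 \<le> l \<Longrightarrow> l < L \<Longrightarrow> \<kappa> * of_int 0 = cb N psip a s (Suc l)"
    using cs by simp
  show ?thesis by (rule zero_prop[OF z c]) auto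
qed

end

lemma ca_Suc: "ca N psip a f (Suc l) w = ca N psip a f l w + (\<Sum>i\<le>N. a (int (Suc l)) i * deriv (f i) w)"
  by (simp add: ca_def)

lemma cb_Suc: "cb N psip a s (Suc l) = cb N psip a s l + bil N (a (int (Suc l))) s"
  by (simp add: cb_def)

lemma cb_0: "cb N psip a s 0 = bil N psip s"
  by (simp add: cb_def)

context chainctx
begin

lemma case_aj:
  fixes K :: complex
  assumes sj: "s = a (int j)" and j: "1 \<le> j" "j \<le> L" and kK: "\<kappa> = K - 1"
    and cpre: "\<And>l. l + 1 < j \<Longrightarrow> cb N psip a s l = 0"
    and cm: "cb N psip a s (j - 1) = - K"
    and cj: "cb N psip a s j = K"
    and cpost: "\<And>l. j < l \<Longrightarrow> l \<le> L \<Longrightarrow> cb N psip a s l = 0"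
  shows "\<rho> 0 L w = 0"
proof -
  have sig: "\<And>w. ca N psip a f (Suc (j - 1)) w = ca N psip a f (j - 1) w + (\<Sum>i\<le>N. s i * deriv (f i) w)"
    using ca_Suc[of N psip a f "j - 1"] j sj by simp
  have Sj: "Suc (j - 1) = j" using j by simp
  have rj: "\<forall>w. \<rho> 0 j w = 0"
  proof (cases "j = 1")
    case True
    have L0: "LP f s (current N psip) w = [:ca N psip a f 0 w:] - monom (- K) 1" for w
      using LP_current[of f s N psip w] cm True by (simp add: ca_def cb_def)
    show ?thesis
    proof
      fix w
      have "\<rho> 0 (Suc 0) w = 0"
      proof (rule second_half[where Y="\<lambda>_. 1" and Y'="\<lambda>_. 0" and K=K])
        show "\<And>w q. 1 < q \<Longrightarrow> coeff (LP f s (X 0) w) q = 0"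
          by (simp add: L0 coeff_monom coeff_pCons split: nat.split)
        show "\<And>w. ((\<lambda>_. 1) has_field_derivative 0) (at w)" by simp
        show "\<And>w. coeff (LP f s (X 0) w) 0 = \<kappa> * 0 + ca N psip a f 0 w * 1"
          by (simp add: L0)
        show "\<And>w. coeff (LP f s (X 0) w) 1 = K * 1"
          by (simp add: L0)
        show "cb N psip a s (Suc 0) = K" using cj True by simp
        show "\<And>w. ca N psip a f (Suc 0) w = ca N psip a f 0 w + (\<Sum>i\<le>N. s i * deriv (f i) w)"
          using sig True by simp
      qed (rule kK)
      then show "\<rho> 0 j w = 0" using True by simp
    qed
  next
    case False
    then have j2: "j \<ge> 2" using j by simp
    define l where "l = j - 2"
    have jl: "j = Suc (Suc l)" using j2 by (simp add: l_def)
    have d: "\<forall>w. degree (LP f s (X l) w) = 0"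
    proof
      fix w show "degree (LP f s (X l) w) = 0"
        by (rule const_upto) (use cpre jl in auto)
    qed
    have cml: "cb N psip a s (Suc l) = - K" using cm jl by simp
    note fh = first_half[OF d cml]
    show ?thesis
    proof
      fix w
      have "\<rho> 0 (Suc (Suc l)) w = 0"
      proof (rule second_half[where Y="\<lambda>w. coeff (LP f s (X l) w) 0" and Y'="\<lambda>w. coeff (LPd f s (X l) w) 0" and K=K])
        show "\<And>w q. 1 < q \<Longrightarrow> coeff (LP f s (X (Suc l)) w) q = 0" by (rule fh(1))
        show "\<And>w. ((\<lambda>w. coeff (LP f s (X l) w) 0) has_field_derivative coeff (LPd f s (X l) w) 0) (at w)"
          by (rule LP_coeff_deriv[OF hol])
        show "\<And>w. coeff (LP f s (X (Suc l)) w) 0 = \<kappa> * coeff (LPd f s (X l) w) 0 + ca N psip a f (Suc l) w * coeff (LP f s (X l) w) 0"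
          by (rule fh(2))
        show "\<And>w. coeff (LP f s (X (Suc l)) w) 1 = K * coeff (LP f s (X l) w) 0"
          by (rule fh(3))
        show "cb N psip a s (Suc (Suc l)) = K" using cj jl by simp
        show "\<And>w. ca N psip a f (Suc (Suc l)) w = ca N psip a f (Suc l) w + (\<Sum>i\<le>N. s i * deriv (f i) w)"
          using sig jl by simp
      qed (rule kK)
      then show "\<rho> 0 j w = 0" using jl by simp
    qed
  qed
  show ?thesis
  proof (rule zero_prop[OF rj])
    show "\<And>l. j \<le> l \<Longrightarrow> l < L \<Longrightarrow> \<kappa> * of_int 0 = cb N psip a s (Suc l)"
      using cpost by simp
  qed (rule j(2))
qed

end

lemma comm_of:
  assumes e: "of_int p * bil N s xi = of_int e"
    and z: "\<And>f w. \<forall>i. f i holomorphic_on UNIV \<Longrightarrow> chainctx.\<rho> N f s psip a \<kappa> e L w = 0"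
  shows "commutes N xi s (DMul (DConst c) (Ch N psip a \<kappa> L)) p"
  unfolding commutes_def
proof (intro exI[of _ e] conjI allI impI)
  show "of_int p * bil N s xi = of_int e" by (rule e)
  fix f :: "nat \<Rightarrow> complex \<Rightarrow> complex" and w
  assume hol: "\<forall>i. f i holomorphic_on UNIV"
  interpret chainctx N f s psip a \<kappa> by unfold_locales (rule hol)
  define C where "C = c * exp (\<Sum>i\<le>N. of_int p * xi i * f i w)"
  have eq: "(z - w) powi e * exp (\<Sum>i\<le>N. s i * f i z + of_int p * xi i * f i w)
        * deval (\<lambda>i j. (deriv ^^ Suc j) (f i) w - fact j * s i / (z - w) ^ Suc j) (DMul (DConst c) (Ch N psip a \<kappa> L))
      = C * ((z - w) powi e * Gf N s f z * poly (LP f s (Ch N psip a \<kappa> L) w) (1 / (z - w)))" if "z \<noteq> w" for z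
    using that LP_eval[OF that, of f s "Ch N psip a \<kappa> L"] unfolding deval.simps
    by (simp only: C_def Gf_def sum.distrib exp_add) (simp add: algebra_simps)
  have "residue (\<lambda>z. (z - w) powi e * exp (\<Sum>i\<le>N. s i * f i z + of_int p * xi i * f i w)
        * deval (\<lambda>i j. (deriv ^^ Suc j) (f i) w - fact j * s i / (z - w) ^ Suc j) (DMul (DConst c) (Ch N psip a \<kappa> L))) w
      = residue (\<lambda>z. C * ((z - w) powi e * Gf N s f z * poly (LP f s (Ch N psip a \<kappa> L) w) (1 / (z - w)))) w"
    by (rule residue_cong) (unfold eventually_at_filter, intro always_eventually allI impI eq, simp_all)
  also have "\<dots> = C * \<rho> e L w"
    unfolding \<rho>_def by (rule res_poly[OF Ghol deg1])
  also have "\<dots> = 0" using z[OF hol] by simp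
  finally show "residue (\<lambda>z. (z - w) powi e * exp (\<Sum>i\<le>N. s i * f i z + of_int p * xi i * f i w)
        * deval (\<lambda>i j. (deriv ^^ Suc j) (f i) w - fact j * s i / (z - w) ^ Suc j) (DMul (DConst c) (Ch N psip a \<kappa> L))) w = 0" .
qed

lemma bil_sym: "bil N u v = bil N v u"
  by (simp add: bil_def mult.commute)

theorem lemma2p4:
  fixes n m :: nat and k :: complex and a :: "int \<Rightarrow> vec" and psip psim xi :: vec
  assumes "2 \<le> n" and "m \<le> n" and "m + 1 \<le> n"
    and "k + of_nat n \<noteq> 0"
    and "gram_ok n m (k + of_nat n) a psip psim xi"
  shows "(\<forall>i\<in>{1..n - m - 1}. commutes n xi (a (int i))
             (DMul (DConst ((-1) ^ (m + 1))) (Pscr n psip a m n k)) (-1))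
       \<and> commutes n xi psip (DMul (DConst ((-1) ^ (m + 1))) (Pscr n psip a m n k)) (-1)
       \<and> (1 \<le> m \<longrightarrow> commutes n xi psim (DMul (DConst ((-1) ^ (m + 1))) (Pscr n psip a m n k)) (-1))
       \<and> (\<forall>i\<in>{1..m - 1}. commutes n xi (a (- int i))
             (DMul (DConst ((-1) ^ (m + 1))) (Pscr n psip a m n k)) (-1))"
proof -
  define L where "L = n - m - 1"
  define K where "K = k + of_nat n"
  define \<kappa> where "\<kappa> = k + of_nat (m + 1 + L) - 1"
  have nL: "n = m + 1 + L" using assms(3) by (simp add: L_def)
  have kK: "\<kappa> = K - 1" by (simp add: \<kappa>_def K_def nL)
  have P: "Pscr n psip a m n k = Ch n psip a \<kappa> L"
    unfolding \<kappa>_def using Pscr_Ch[of n psip a m L k] nL by simp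
  define J where "J = {j::int. 1 \<le> j \<and> j \<le> int n - int m - 1} \<union> {j::int. - (int m - 1) \<le> j \<and> j \<le> -1}"
  have g: "(\<forall>i\<in>J. \<forall>j\<in>J. bil n (a i) (a j) = (if i = j then 2 * K else if \<bar>i - j\<bar> = 1 then - K else 0))
     \<and> (\<forall>j\<in>J. bil n (a j) xi = 0)
     \<and> (m < n \<longrightarrow> bil n psip psip = 1 \<and> bil n psip xi = 1 \<and>
                   (\<forall>j\<in>J. bil n (a j) psip = (if j = 1 then - K else 0)))
     \<and> (1 \<le> m \<longrightarrow> bil n psim psim = 1 \<and> bil n psim xi = -1 \<and>
                   (\<forall>j\<in>J. bil n (a j) psim = (if j = -1 then - K else 0)))
     \<and> (m < n \<and> 1 \<le> m \<longrightarrow> bil n psip psim = K - 1)"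
    using assms(5) unfolding gram_ok_def Let_def J_def K_def by blast
  have mn: "m < n" using assms(3) by simp
  have Jpos: "int r \<in> J" if "1 \<le> r" "r \<le> L" for r
    using that unfolding J_def L_def using assms(3) by auto
  have Jneg: "- int r \<in> J" if "1 \<le> r" "r \<le> m - 1" for r
    using that unfolding J_def by auto
  have gaa: "bil n (a i) (a j) = (if i = j then 2 * K else if \<bar>i - j\<bar> = 1 then - K else 0)"
    if "i \<in> J" "j \<in> J" for i j using g that by blast
  have gax: "bil n (a j) xi = 0" if "j \<in> J" for j using g that by blast
  have gpp: "bil n psip psip = 1" and gpx: "bil n psip xi = 1" using g mn by auto
  have gap: "bil n (a j) psip = (if j = 1 then - K else 0)" if "j \<in> J" for j using g that mn by blast
  define c :: complex where "c = (-1) ^ (m + 1)"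
  note comm = comm_of[where c=c and L=L and \<kappa>=\<kappa> and psip=psip and a=a and N=n and xi=xi]
  have C1: "\<forall>i\<in>{1..n - m - 1}. commutes n xi (a (int i)) (DMul (DConst c) (Ch n psip a \<kappa> L)) (-1)"
  proof
    fix i assume i: "i \<in> {1..n - m - 1}"
    then have i1: "1 \<le> i" and iL: "i \<le> L" by (auto simp: L_def)
    have iJ: "int i \<in> J" using i1 iL Jpos by auto
    have cbF: "cb n psip a (a (int i)) l = (if i = 1 then - K else 0) + (if i \<le> l then 2 * K else 0)
        - (if 2 \<le> i \<and> i - 1 \<le> l then K else 0) - (if i + 1 \<le> l then K else 0)" if lL: "l \<le> L" for l
    proof -
      have "(\<Sum>r\<in>{1..l}. bil n (a (int r)) (a (int i)))
          = (\<Sum>r\<in>{1..l}. (if r = i then 2 * K else 0) - (if r = i - 1 then K else 0) - (if r = i + 1 then K else 0))"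
      proof (rule sum.cong[OF refl])
        fix r assume r: "r \<in> {1..l}"
        then have rJ: "int r \<in> J" using lL Jpos by auto
        show "bil n (a (int r)) (a (int i)) = (if r = i then 2 * K else 0) - (if r = i - 1 then K else 0) - (if r = i + 1 then K else 0)"
          using gaa[OF rJ iJ] r i1 by (auto simp: abs_if split: if_splits)
      qed
      also have "\<dots> = (if i \<le> l then 2 * K else 0) - (if 2 \<le> i \<and> i - 1 \<le> l then K else 0) - (if i + 1 \<le> l then K else 0)"
        using i1 by (simp add: sum_subtractf sum.delta) arith
      finally show ?thesis
        using gap[OF iJ] by (simp add: cb_def bil_sym[of n psip])
    qed
    show "commutes n xi (a (int i)) (DMul (DConst c) (Ch n psip a \<kappa> L)) (-1)"
    proof (rule comm[where e=0])
      show "of_int (-1) * bil n (a (int i)) xi = of_int 0" using gax[OF iJ] by simp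
      fix f :: "nat \<Rightarrow> complex \<Rightarrow> complex" and w
      assume hol: "\<forall>i. f i holomorphic_on UNIV"
      show "chainctx.\<rho> n f (a (int i)) psip a \<kappa> 0 L w = 0"
      proof (rule chainctx.case_aj[OF chainctx.intro[OF hol] refl i1 iL kK])
        show "\<And>l. l + 1 < i \<Longrightarrow> cb n psip a (a (int i)) l = 0"
          using cbF iL by auto
        show "cb n psip a (a (int i)) (i - 1) = - K"
          using cbF iL i1 by auto
        show "cb n psip a (a (int i)) i = K"
          using cbF iL i1 by auto
        show "\<And>l. i < l \<Longrightarrow> l \<le> L \<Longrightarrow> cb n psip a (a (int i)) l = 0"
          using cbF i1 by auto
      qed
    qed
  qed
  have C2: "commutes n xi psip (DMul (DConst c) (Ch n psip a \<kappa> L)) (-1)"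
  proof (rule comm[where e="-1"])
    show "of_int (-1) * bil n psip xi = of_int (-1)" using gpx by simp
    fix f :: "nat \<Rightarrow> complex \<Rightarrow> complex" and w
    assume hol: "\<forall>i. f i holomorphic_on UNIV"
    show "chainctx.\<rho> n f psip psip a \<kappa> (-1) L w = 0"
    proof (rule chainctx.case_psip[OF chainctx.intro[OF hol]])
      show "cb n psip a psip 0 = 1" using gpp by (simp add: cb_0)
      fix l assume l: "l < L"
      have "(\<Sum>r\<in>{1..Suc l}. bil n (a (int r)) psip) = (\<Sum>r\<in>{1..Suc l}. if r = 1 then - K else 0)"
        by (rule sum.cong[OF refl]) (use l Jpos gap in auto)
      also have "\<dots> = - K" by simp
      finally show "cb n psip a psip (Suc l) = - \<kappa>" using gpp by (simp add: cb_def kK)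
    qed simp
  qed
  have C3: "1 \<le> m \<longrightarrow> commutes n xi psim (DMul (DConst c) (Ch n psip a \<kappa> L)) (-1)"
  proof
    assume m1: "1 \<le> m"
    have gmx: "bil n psim xi = -1" and gam: "\<And>j. j \<in> J \<Longrightarrow> bil n (a j) psim = (if j = -1 then - K else 0)"
      and gpm: "bil n psip psim = K - 1" using g m1 mn by auto
    show "commutes n xi psim (DMul (DConst c) (Ch n psip a \<kappa> L)) (-1)"
    proof (rule comm[where e=1])
      show "of_int (-1) * bil n psim xi = of_int 1" using gmx by simp
      fix f :: "nat \<Rightarrow> complex \<Rightarrow> complex" and w
      assume hol: "\<forall>i. f i holomorphic_on UNIV"
      show "chainctx.\<rho> n f psim psip a \<kappa> 1 L w = 0"
      proof (rule chainctx.case_psim[OF chainctx.intro[OF hol]])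
        fix l assume l: "l < L"
        have "(\<Sum>r\<in>{1..Suc l}. bil n (a (int r)) psim) = (\<Sum>r\<in>{1..Suc l}. 0)"
          by (rule sum.cong[OF refl]) (use l Jpos gam in auto)
        then show "cb n psip a psim (Suc l) = \<kappa>" using gpm by (simp add: cb_def kK)
      qed
    qed
  qed
  have C4: "\<forall>i\<in>{1..m - 1}. commutes n xi (a (- int i)) (DMul (DConst c) (Ch n psip a \<kappa> L)) (-1)"
  proof
    fix i assume i: "i \<in> {1..m - 1}"
    have iJ: "- int i \<in> J" using i Jneg by auto
    show "commutes n xi (a (- int i)) (DMul (DConst c) (Ch n psip a \<kappa> L)) (-1)"
    proof (rule comm[where e=0])
      show "of_int (-1) * bil n (a (- int i)) xi = of_int 0" using gax[OF iJ] by simp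
      fix f :: "nat \<Rightarrow> complex \<Rightarrow> complex" and w
      assume hol: "\<forall>i. f i holomorphic_on UNIV"
      show "chainctx.\<rho> n f (a (- int i)) psip a \<kappa> 0 L w = 0"
      proof (rule chainctx.case_zero[OF chainctx.intro[OF hol]])
        show "cb n psip a (a (- int i)) 0 = 0"
          using gap[OF iJ] by (simp add: cb_0 bil_sym[of n psip])
        fix l assume l: "l < L"
        have "(\<Sum>r\<in>{1..Suc l}. bil n (a (int r)) (a (- int i))) = (\<Sum>r\<in>{1..Suc l}. 0)"
        proof (rule sum.cong[OF refl])
          fix r assume r: "r \<in> {1..Suc l}"
          then have rJ: "int r \<in> J" using l Jpos by auto
          show "bil n (a (int r)) (a (- int i)) = 0"
            using gaa[OF rJ iJ] r i by auto
        qed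
        then show "cb n psip a (a (- int i)) (Suc l) = 0"
          using gap[OF iJ] by (simp add: cb_def bil_sym[of n psip])
      qed
    qed
  qed
  show ?thesis using C1 C2 C3 C4 unfolding P c_def by blast
qed

end
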